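(* Let $M\in SL_2(\mathbb{Z})$ be hyperbolic and let $\epsilon>0$. Then there exists $c_M>0$ such that for every $\kappa$ with $0\le\kappa<c_M$ there exist constants $c_1>c_2>0$ such that for all $n_1,n_2\in\mathbb{Z}^2$ there exists $y_{n_1,n_2}\in\mathbb{R}^2$ with $\|y_{n_1,n_2}\|<\epsilon$ such that for every map $R:\mathbb{R}^2\to\mathbb{R}_{\ge0}$ satisfying $R(z)\le\kappa\|z\|$ for all $z$ with $\|z\|<\epsilon$, one has $$-c_1\big(|n_1|_M-|n_2|_M\big)-\big(n_2^TM-n_1^T\big)y_{n_1,n_2}+\|n_2\|\,R(y_{n_1,n_2})\le -c_2\big(\|n_1\|+\|n_2\|\big).$$
   Context: For $z=(z_1,z_2)\in\mathbb{R}^2$, $\|z\|=|z_1|+|z_2|$; $n^T$ denotes the transpose (row vector). A matrix $M\in SL_2(\mathbb{Z})$ is hyperbolic if none of its eigenvalues has modulus $1$; let $E^+,E^-$ be the eigenlines of the transpose $M^T$ for the eigenvalues of modulus $\lambda_M>1$ and $\lambda_M^{-1}$. Every $y\in\mathbb{R}^2$ decomposes uniquely as $y=y^+_M+y^-_M$ with $y^\pm_M\in E^\pm$, and $|y|_M:=\|y^+_M\|-\|y^-_M\|$. *)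

theory Defs
  imports "HOL-Analysis.Analysis"
begin

definition norm1 :: "real^2 \<Rightarrow> real" where
  "norm1 z = \<bar>z $ 1\<bar> + \<bar>z $ 2\<bar>"

definition int_vec :: "real^2 \<Rightarrow> bool" where
  "int_vec n \<longleftrightarrow> (\<forall>i. n $ i \<in> \<int>)"

definition SL2Z :: "real^2^2 \<Rightarrow> bool" where
  "SL2Z M \<longleftrightarrow> (\<forall>i j. M $ i $ j \<in> \<int>) \<and> det M = 1"

definition cmat :: "real^2^2 \<Rightarrow> complex^2^2" where
  "cmat M = (\<chi> i j. complex_of_real (M $ i $ j))"

definition hyperbolic :: "real^2^2 \<Rightarrow> bool" where
  "hyperbolic M \<longleftrightarrow>
     (\<forall>l::complex. (\<exists>v. v \<noteq> 0 \<and> cmat M *v v = l *s v) \<longrightarrow> cmod l \<noteq> 1)"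

definition Eplus :: "real^2^2 \<Rightarrow> (real^2) set" where
  "Eplus M = {v. \<exists>l. \<bar>l\<bar> > 1 \<and> transpose M *v v = l *s v}"

definition Eminus :: "real^2^2 \<Rightarrow> (real^2) set" where
  "Eminus M = {v. \<exists>l. \<bar>l\<bar> < 1 \<and> transpose M *v v = l *s v}"

definition ydecomp :: "real^2^2 \<Rightarrow> real^2 \<Rightarrow> (real^2) \<times> (real^2)" where
  "ydecomp M y = (THE p. fst p \<in> Eplus M \<and> snd p \<in> Eminus M \<and> y = fst p + snd p)"

definition Mnorm :: "real^2^2 \<Rightarrow> real^2 \<Rightarrow> real" where
  "Mnorm M y = norm1 (fst (ydecomp M y)) - norm1 (snd (ydecomp M y))"

end

theory Submission imports Defs begin

lemma mv2: "(A *v (x::'a::comm_semiring_1^2)) $ i = A$i$1 * x$1 + A$i$2 * x$2"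
  by (simp add: matrix_vector_mult_def sum_2)

lemma eig2:
  fixes A :: "'a::field^2^2"
  assumes "l^2 - (A$1$1 + A$2$2)*l + (A$1$1*A$2$2 - A$1$2*A$2$1) = 0"
  shows "\<exists>v. v \<noteq> 0 \<and> A *v v = l *s v"
proof -
  let ?p = "A$1$1" and ?q = "A$1$2" and ?r = "A$2$1" and ?s = "A$2$2"
  show ?thesis
  proof (cases "?q \<noteq> 0 \<or> l - ?p \<noteq> 0")
    case True
    let ?v = "vector [?q, l - ?p] :: 'a^2"
    have "?v \<noteq> 0" using True by (auto simp: vec_eq_iff forall_2)
    moreover have "A *v ?v = l *s ?v"
      using assms by (auto simp: vec_eq_iff forall_2 mv2 algebra_simps power2_eq_square)
    ultimately show ?thesis by blast
  next
    case F: False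
    show ?thesis
    proof (cases "l - ?s \<noteq> 0 \<or> ?r \<noteq> 0")
      case True
      let ?v = "vector [l - ?s, ?r] :: 'a^2"
      have "?v \<noteq> 0" using True by (auto simp: vec_eq_iff forall_2)
      moreover have "A *v ?v = l *s ?v"
        using assms F by (auto simp: vec_eq_iff forall_2 mv2 algebra_simps power2_eq_square)
      ultimately show ?thesis by blast
    next
      case False
      let ?v = "vector [1, 0] :: 'a^2"
      have "?v \<noteq> 0" by (auto simp: vec_eq_iff forall_2)
      moreover have "A *v ?v = l *s ?v"
        using False F by (auto simp: vec_eq_iff forall_2 mv2)
      ultimately show ?thesis by blast
    qed
  qed
qed

lemma trace_gt:
  assumes "SL2Z M" "hyperbolic M"
  shows "(M$1$1 + M$2$2)^2 > 4"
proof (rule ccontr)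
  let ?t = "M$1$1 + M$2$2"
  assume "\<not> ?t^2 > 4"
  hence h: "4 - ?t^2 \<ge> 0" by simp
  define s where "s = sqrt (4 - ?t^2)"
  have s2: "s^2 = 4 - ?t^2" using h s_def by simp
  define lam where "lam = Complex (?t/2) (s/2)"
  have d: "M$1$1*M$2$2 - M$1$2*M$2$1 = 1" using assms(1) by (simp add: SL2Z_def det_2)
  have "lam^2 - (cmat M$1$1 + cmat M$2$2)*lam + (cmat M$1$1*cmat M$2$2 - cmat M$1$2*cmat M$2$1) = 0"
  proof -
    have e: "cmat M$1$1*cmat M$2$2 - cmat M$1$2*cmat M$2$1 = 1"
      unfolding cmat_def using d by (simp flip: of_real_mult of_real_diff)
    have "lam^2 - (cmat M$1$1 + cmat M$2$2)*lam + 1 = 0"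
      unfolding lam_def cmat_def using s2
      by (simp add: complex_eq_iff power2_eq_square field_simps)
    thus ?thesis using e by simp
  qed
  then obtain v where "v \<noteq> 0" "cmat M *v v = lam *s v" using eig2 by blast
  hence "cmod lam \<noteq> 1" using assms(2) unfolding hyperbolic_def by blast
  moreover have "cmod lam = 1"
    unfolding lam_def cmod_def using s2 by (simp add: power_divide field_simps)
  ultimately show False by simp
qed

lemma key:
  assumes "SL2Z M" "hyperbolic M"
  shows "\<exists>L g. L \<ge> 1 \<and> 0 < g \<and> g \<le> 1 \<and>
    (\<forall>x z. \<bar>Mnorm M x - Mnorm M z\<bar> \<le> L * norm1 (x - z)) \<and>
    (\<forall>n. Mnorm M (transpose M *v n) - Mnorm M n \<ge> g * norm1 n)"
proof -
  define t where "t = M$1$1 + M$2$2"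
  have t4: "t^2 > 4" using trace_gt[OF assms] t_def by simp
  have d: "M$1$1*M$2$2 - M$1$2*M$2$1 = 1" using assms(1) by (simp add: SL2Z_def det_2)
  have dT: "M$1$1*M$2$2 - M$2$1*M$1$2 = 1" using d by (simp add: mult.commute)
  obtain l where l1: "\<bar>l\<bar> > 1" and lq: "l^2 - t*l + 1 = 0"
  proof -
    define s where "s = sqrt (t^2-4)"
    have s2: "s^2 = t^2 - 4" "s \<ge> 0" using t4 by (auto simp: s_def)
    show ?thesis
    proof (cases "t > 0")
      case True
      have "t > 2"
      proof (rule ccontr)
        assume "\<not> t > 2"
        hence "t^2 \<le> 2^2" using True by (intro power_mono) auto
        thus False using t4 by simp
      qed
      show ?thesis
        apply (rule that[of "(t+s)/2"])
        using s2 \<open>t > 2\<close> by (auto simp: field_simps power2_eq_square)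
    next
      case False
      have "t < -2"
      proof (rule ccontr)
        assume "\<not> t < -2"
        hence "(-t)^2 \<le> 2^2" using False by (intro power_mono) auto
        thus False using t4 by simp
      qed
      show ?thesis
        apply (rule that[of "(t-s)/2"])
        using s2 \<open>t < -2\<close> by (auto simp: field_simps power2_eq_square)
    qed
  qed
  define m where "m = 1/l"
  have l0: "l \<noteq> 0" using l1 by auto
  have lm: "l*m = 1" using l0 by (simp add: m_def)
  have m1: "\<bar>m\<bar> < 1" using l1 by (simp add: m_def abs_divide)
  have mq: "m^2 - t*m + 1 = 0"
  proof -
    have "m^2 - t*m + 1 = (l^2 - t*l + 1) / l^2" using l0 by (simp add: m_def field_simps power2_eq_square)
    thus ?thesis using lq by simp
  qed
  have lnm: "l \<noteq> m" using l1 m1 by auto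
  obtain u where u0: "u \<noteq> 0" and hu: "transpose M *v u = l *s u"
    using eig2[of l "transpose M"] lq dT by (auto simp: transpose_def t_def)
  obtain v where v0: "v \<noteq> 0" and hv: "transpose M *v v = m *s v"
    using eig2[of m "transpose M"] mq dT by (auto simp: transpose_def t_def)
  have hu1: "M$1$1*u$1 + M$2$1*u$2 = l*u$1" and hu2: "M$1$2*u$1 + M$2$2*u$2 = l*u$2"
    using hu by (auto simp: vec_eq_iff forall_2 mv2 transpose_def)
  have hv1: "M$1$1* v$1 + M$2$1* v$2 = m* v$1" and hv2: "M$1$2* v$1 + M$2$2* v$2 = m* v$2"
    using hv by (auto simp: vec_eq_iff forall_2 mv2 transpose_def)
  define D where "D = u$1* v$2 - u$2* v$1"
  have D0: "D \<noteq> 0"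
  proof
    assume D: "D = 0"
    have "v$1*u$1*(l-m) = 0" using hu1 hv1 D unfolding D_def by algebra
    moreover have "v$1*u$2*(l-m) = 0" using hu2 hv2 D unfolding D_def by algebra
    moreover have "v$2*u$1*(l-m) = 0" using hu1 hv1 D unfolding D_def by algebra
    moreover have "v$2*u$2*(l-m) = 0" using hu2 hv2 D unfolding D_def by algebra
    ultimately have "v$1*u$1 = 0" "v$1*u$2 = 0" "v$2*u$1 = 0" "v$2*u$2 = 0" using lnm by auto
    moreover have "u$1 \<noteq> 0 \<or> u$2 \<noteq> 0" using u0 by (auto simp: vec_eq_iff forall_2)
    ultimately have "v$1 = 0" "v$2 = 0" by auto
    thus False using v0 by (auto simp: vec_eq_iff forall_2)
  qed
  define al where "al x = (x$1 * v$2 - x$2 * v$1)/D" for x :: "real^2"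
  define be where "be x = (u$1 * x$2 - u$2 * x$1)/D" for x :: "real^2"
  have dec1: "x$1 = al x * u$1 + be x * v$1" for x
  proof -
    have "al x * u$1 + be x * v$1 = ((x$1 * v$2 - x$2 * v$1)*u$1 + (u$1*x$2 - u$2*x$1) * v$1)/D"
      by (simp add: al_def be_def add_divide_distrib)
    also have "\<dots> = x$1 * D / D" by (simp add: D_def algebra_simps)
    finally show ?thesis using D0 by simp
  qed
  have dec2: "x$2 = al x * u$2 + be x * v$2" for x
  proof -
    have "al x * u$2 + be x * v$2 = ((x$1 * v$2 - x$2 * v$1)*u$2 + (u$1*x$2 - u$2*x$1) * v$2)/D"
      by (simp add: al_def be_def add_divide_distrib)
    also have "\<dots> = x$2 * D / D" by (simp add: D_def algebra_simps)
    finally show ?thesis using D0 by simp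
  qed
  have uniq: "c = 0 \<and> e = 0" if "c*u$1 + e * v$1 = 0" "c*u$2 + e * v$2 = 0" for c e
  proof -
    have "c*D = 0" using that unfolding D_def by algebra
    moreover have "e*D = 0" using that unfolding D_def by algebra
    ultimately show ?thesis using D0 by simp
  qed
  have cuniq: "c = al x \<and> e = be x" if "x$1 = c*u$1 + e * v$1" "x$2 = c*u$2 + e * v$2" for x c e
  proof -
    have "(c - al x)*u$1 + (e - be x) * v$1 = 0" using that(1) dec1[of x] by (simp add: algebra_simps)
    moreover have "(c - al x)*u$2 + (e - be x) * v$2 = 0" using that(2) dec2[of x] by (simp add: algebra_simps)
    ultimately have "c - al x = 0 \<and> e - be x = 0" by (rule uniq)
    thus ?thesis by simp
  qed
  have Ax1: "(transpose M *v x)$1 = (l * al x) * u$1 + (m * be x) * v$1" for x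
  proof -
    have "(transpose M *v x)$1 = M$1$1*x$1 + M$2$1*x$2" by (simp add: mv2 transpose_def)
    thus ?thesis using dec1[of x] dec2[of x] hu1 hv1 by algebra
  qed
  have Ax2: "(transpose M *v x)$2 = (l * al x) * u$2 + (m * be x) * v$2" for x
  proof -
    have "(transpose M *v x)$2 = M$1$2*x$1 + M$2$2*x$2" by (simp add: mv2 transpose_def)
    thus ?thesis using dec1[of x] dec2[of x] hu2 hv2 by algebra
  qed
  have alA: "al (transpose M *v x) = l * al x" and beA: "be (transpose M *v x) = m * be x" for x
    using cuniq[OF Ax1 Ax2] by auto
  have EP1: "x = al x *s u" if xE: "x \<in> Eplus M" for x
  proof -
    obtain l' where l': "\<bar>l'\<bar> > 1" "transpose M *v x = l' *s x" using xE unfolding Eplus_def by blast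
    have "x$1 = (l * al x / l') * u$1 + (m * be x / l') * v$1"
      "x$2 = (l * al x / l') * u$2 + (m * be x / l') * v$2"
      using l' Ax1[of x] Ax2[of x] by (auto simp: vec_eq_iff forall_2 field_simps)
    hence "m * be x / l' = be x" by (rule cuniq[THEN conjunct2])
    moreover have "m \<noteq> l'" using m1 l' by auto
    ultimately have "be x = 0" using l' by (auto simp: field_simps)
    thus ?thesis using dec1[of x] dec2[of x] by (auto simp: vec_eq_iff forall_2)
  qed
  have EM1: "x = be x *s v" if xE: "x \<in> Eminus M" for x
  proof -
    obtain l' where l': "\<bar>l'\<bar> < 1" "transpose M *v x = l' *s x" using xE unfolding Eminus_def by blast
    have "l' * x$1 = (l * al x) * u$1 + (m * be x) * v$1"
      "l' * x$2 = (l * al x) * u$2 + (m * be x) * v$2"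
      using l' Ax1[of x] Ax2[of x] by (auto simp: vec_eq_iff forall_2)
    hence "(l' * al x - l * al x) * u$1 + (l' * be x - m * be x) * v$1 = 0"
          "(l' * al x - l * al x) * u$2 + (l' * be x - m * be x) * v$2 = 0"
      using dec1[of x] dec2[of x] by (auto simp: algebra_simps)
    hence "l' * al x - l * al x = 0" by (rule uniq[THEN conjunct1])
    hence "(l' - l) * al x = 0" by (simp add: algebra_simps)
    moreover have "l \<noteq> l'" using l1 l' by auto
    ultimately have "al x = 0" by simp
    thus ?thesis using dec1[of x] dec2[of x] by (auto simp: vec_eq_iff forall_2)
  qed
  have EP2: "c *s u \<in> Eplus M" for c
  proof -
    have "transpose M *v (c *s u) = l *s (c *s u)"
      using hu by (simp add: scalar_mult_eq_scaleR matrix_vector_mult_scaleR algebra_simps)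
    thus ?thesis using l1 unfolding Eplus_def by blast
  qed
  have EM2: "c *s v \<in> Eminus M" for c
  proof -
    have "transpose M *v (c *s v) = m *s (c *s v)"
      using hv by (simp add: scalar_mult_eq_scaleR matrix_vector_mult_scaleR algebra_simps)
    thus ?thesis using m1 unfolding Eminus_def by blast
  qed
  have yd: "ydecomp M x = (al x *s u, be x *s v)" for x
    unfolding ydecomp_def
  proof (rule the_equality)
    show "fst (al x *s u, be x *s v) \<in> Eplus M \<and> snd (al x *s u, be x *s v) \<in> Eminus M \<and>
       x = fst (al x *s u, be x *s v) + snd (al x *s u, be x *s v)"
      using EP2 EM2 dec1[of x] dec2[of x] by (auto simp: vec_eq_iff forall_2)
  next
    fix p assume p: "fst p \<in> Eplus M \<and> snd p \<in> Eminus M \<and> x = fst p + snd p"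
    hence "fst p = al (fst p) *s u" "snd p = be (snd p) *s v" using EP1 EM1 by auto
    with p have "x$1 = al (fst p) * u$1 + be (snd p) * v$1" "x$2 = al (fst p) * u$2 + be (snd p) * v$2"
      by (metis vector_add_component vector_smult_component)+
    hence "al (fst p) = al x \<and> be (snd p) = be x" using cuniq by blast
    thus "p = (al x *s u, be x *s v)"
      using \<open>fst p = _\<close> \<open>snd p = _\<close> by (metis prod.collapse)
  qed
  have n1s: "norm1 (c *s w) = \<bar>c\<bar> * norm1 w" for c w
    by (simp add: norm1_def abs_mult algebra_simps)
  have Mn: "Mnorm M x = \<bar>al x\<bar> * norm1 u - \<bar>be x\<bar> * norm1 v" for x
    by (simp add: Mnorm_def yd n1s)
  define Nu where "Nu = norm1 u"
  define Nv where "Nv = norm1 v"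
  have Nu0: "Nu \<ge> 0" and Nv0: "Nv \<ge> 0" by (auto simp: Nu_def Nv_def norm1_def)
  define Ka where "Ka = (\<bar>v$1\<bar> + \<bar>v$2\<bar>) / \<bar>D\<bar>"
  define Kb where "Kb = (\<bar>u$1\<bar> + \<bar>u$2\<bar>) / \<bar>D\<bar>"
  have bil: "\<bar>a*d - b*c\<bar> \<le> (\<bar>c\<bar> + \<bar>d\<bar>) * (\<bar>a\<bar> + \<bar>b\<bar>)" for a b c d :: real
  proof -
    have "\<bar>a*d - b*c\<bar> \<le> \<bar>a\<bar>*\<bar>d\<bar> + \<bar>b\<bar>*\<bar>c\<bar>"
      using abs_triangle_ineq4[of "a*d" "b*c"] by (simp add: abs_mult)
    moreover have "0 \<le> \<bar>a\<bar>*\<bar>c\<bar>" "0 \<le> \<bar>b\<bar>*\<bar>d\<bar>" by auto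
    moreover have "(\<bar>c\<bar> + \<bar>d\<bar>) * (\<bar>a\<bar> + \<bar>b\<bar>) = \<bar>a\<bar>*\<bar>c\<bar> + \<bar>a\<bar>*\<bar>d\<bar> + \<bar>b\<bar>*\<bar>c\<bar> + \<bar>b\<bar>*\<bar>d\<bar>"
      by (simp add: algebra_simps)
    ultimately show ?thesis by linarith
  qed
  have alb: "\<bar>al y\<bar> \<le> Ka * norm1 y" for y
  proof -
    have "\<bar>al y\<bar> = \<bar>y$1 * v$2 - y$2 * v$1\<bar> / \<bar>D\<bar>" by (simp add: al_def abs_divide)
    also have "\<dots> \<le> ((\<bar>v$1\<bar> + \<bar>v$2\<bar>) * (\<bar>y$1\<bar> + \<bar>y$2\<bar>)) / \<bar>D\<bar>"
      by (intro divide_right_mono bil) auto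
    finally show ?thesis by (simp add: Ka_def norm1_def)
  qed
  have beb: "\<bar>be y\<bar> \<le> Kb * norm1 y" for y
  proof -
    have "\<bar>be y\<bar> = \<bar>y$2 * u$1 - y$1 * u$2\<bar> / \<bar>D\<bar>" by (simp add: be_def abs_divide mult.commute)
    also have "\<dots> \<le> ((\<bar>u$2\<bar> + \<bar>u$1\<bar>) * (\<bar>y$2\<bar> + \<bar>y$1\<bar>)) / \<bar>D\<bar>"
      by (intro divide_right_mono bil) auto
    finally show ?thesis by (simp add: Kb_def norm1_def add.commute)
  qed
  have allin: "al (x - z) = al x - al z" "be (x - z) = be x - be z" for x z
    by (simp_all add: al_def be_def diff_divide_distrib[symmetric] algebra_simps)
  define L where "L = Ka * Nu + Kb * Nv + 1"
  have Ka0: "Ka \<ge> 0" "Kb \<ge> 0" by (auto simp: Ka_def Kb_def)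
  have L1: "L \<ge> 1" using Ka0 Nu0 Nv0 by (simp add: L_def)
  have lip: "\<bar>Mnorm M x - Mnorm M z\<bar> \<le> L * norm1 (x - z)" for x z
  proof -
    have "\<bar>Mnorm M x - Mnorm M z\<bar> = \<bar>(\<bar>al x\<bar> - \<bar>al z\<bar>) * Nu - (\<bar>be x\<bar> - \<bar>be z\<bar>) * Nv\<bar>"
      by (simp add: Mn Nu_def Nv_def algebra_simps)
    also have "\<dots> \<le> \<bar>\<bar>al x\<bar> - \<bar>al z\<bar>\<bar> * Nu + \<bar>\<bar>be x\<bar> - \<bar>be z\<bar>\<bar> * Nv"
      using abs_triangle_ineq4 Nu0 Nv0 by (metis abs_mult abs_of_nonneg)
    also have "\<dots> \<le> \<bar>al (x - z)\<bar> * Nu + \<bar>be (x - z)\<bar> * Nv"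
      unfolding allin using Nu0 Nv0
      by (intro add_mono mult_right_mono abs_triangle_ineq3) auto
    also have "\<dots> \<le> (Ka * norm1 (x - z)) * Nu + (Kb * norm1 (x - z)) * Nv"
      using Nu0 Nv0 alb beb by (intro add_mono mult_right_mono) auto
    also have "\<dots> \<le> L * norm1 (x - z)"
      using Ka0 Nu0 Nv0 by (simp add: L_def algebra_simps norm1_def)
    finally show ?thesis .
  qed
  define g where "g = 1 - \<bar>m\<bar>"
  have g0: "0 < g" "g \<le> 1" using m1 by (auto simp: g_def)
  have lg: "\<bar>l\<bar> - 1 \<ge> g"
  proof -
    have "\<bar>l\<bar> * \<bar>m\<bar> = 1" using lm by (simp flip: abs_mult)
    moreover have "(\<bar>l\<bar> - 1) * (1 - \<bar>m\<bar>) \<ge> 0" using l1 m1 by simp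
    ultimately show ?thesis by (simp add: g_def algebra_simps)
  qed
  have exp: "Mnorm M (transpose M *v n) - Mnorm M n \<ge> g * norm1 n" for n
  proof -
    have "norm1 n \<le> \<bar>al n\<bar> * Nu + \<bar>be n\<bar> * Nv"
    proof -
      have "norm1 n = \<bar>al n * u$1 + be n * v$1\<bar> + \<bar>al n * u$2 + be n * v$2\<bar>"
        unfolding norm1_def using dec1[of n] dec2[of n] by simp
      also have "\<dots> \<le> (\<bar>al n\<bar> * \<bar>u$1\<bar> + \<bar>be n\<bar> * \<bar>v$1\<bar>) + (\<bar>al n\<bar> * \<bar>u$2\<bar> + \<bar>be n\<bar> * \<bar>v$2\<bar>)"
        by (intro add_mono) (metis abs_mult abs_triangle_ineq)+
      finally show ?thesis by (simp add: Nu_def Nv_def norm1_def algebra_simps)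
    qed
    moreover have "Mnorm M (transpose M *v n) - Mnorm M n
        = (\<bar>l\<bar> - 1) * (\<bar>al n\<bar> * Nu) + (1 - \<bar>m\<bar>) * (\<bar>be n\<bar> * Nv)"
      unfolding Mn alA beA by (simp add: abs_mult Nu_def Nv_def algebra_simps)
    moreover have "(\<bar>l\<bar> - 1) * (\<bar>al n\<bar> * Nu) \<ge> g * (\<bar>al n\<bar> * Nu)"
      using lg Nu0 by (intro mult_right_mono) auto
    moreover have "g * (\<bar>al n\<bar> * Nu + \<bar>be n\<bar> * Nv) \<ge> g * norm1 n"
      using g0 calculation(1) by (intro mult_left_mono) auto
    ultimately show ?thesis by (simp add: g_def algebra_simps)
  qed
  show ?thesis using L1 g0 lip exp by blast
qed

lemma norm1_tri: "norm1 (a - b) \<le> norm1 a + norm1 b"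
  unfolding norm1_def by simp

lemma norm1_minus: "norm1 (a - b) = norm1 (b - a)"
  unfolding norm1_def by simp

lemma norm1_nn: "norm1 a \<ge> 0"
  unfolding norm1_def by simp

lemma Tbound:
  "norm1 (transpose M *v n) \<le> (\<bar>M$1$1\<bar> + \<bar>M$1$2\<bar> + \<bar>M$2$1\<bar> + \<bar>M$2$2\<bar>) * norm1 n"
proof -
  have e: "norm1 (transpose M *v n) = \<bar>M$1$1*n$1 + M$2$1*n$2\<bar> + \<bar>M$1$2*n$1 + M$2$2*n$2\<bar>"
    by (simp add: norm1_def mv2 transpose_def)
  have a: "\<bar>M$1$1*n$1 + M$2$1*n$2\<bar> \<le> \<bar>M$1$1\<bar>*\<bar>n$1\<bar> + \<bar>M$2$1\<bar>*\<bar>n$2\<bar>"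
    by (metis abs_mult abs_triangle_ineq)
  have b: "\<bar>M$1$2*n$1 + M$2$2*n$2\<bar> \<le> \<bar>M$1$2\<bar>*\<bar>n$1\<bar> + \<bar>M$2$2\<bar>*\<bar>n$2\<bar>"
    by (metis abs_mult abs_triangle_ineq)
  have c: "0 \<le> \<bar>M$1$1\<bar>*\<bar>n$2\<bar>" "0 \<le> \<bar>M$2$1\<bar>*\<bar>n$1\<bar>" "0 \<le> \<bar>M$1$2\<bar>*\<bar>n$2\<bar>" "0 \<le> \<bar>M$2$2\<bar>*\<bar>n$1\<bar>"
    by auto
  have d: "(\<bar>M$1$1\<bar> + \<bar>M$1$2\<bar> + \<bar>M$2$1\<bar> + \<bar>M$2$2\<bar>) * norm1 n =
     \<bar>M$1$1\<bar>*\<bar>n$1\<bar> + \<bar>M$1$1\<bar>*\<bar>n$2\<bar> + \<bar>M$1$2\<bar>*\<bar>n$1\<bar> + \<bar>M$1$2\<bar>*\<bar>n$2\<bar>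
     + \<bar>M$2$1\<bar>*\<bar>n$1\<bar> + \<bar>M$2$1\<bar>*\<bar>n$2\<bar> + \<bar>M$2$2\<bar>*\<bar>n$1\<bar> + \<bar>M$2$2\<bar>*\<bar>n$2\<bar>"
    by (simp add: norm1_def algebra_simps)
  show ?thesis using a b c d e by linarith
qed

lemma sgn_self: "(x::real) * sgn x = \<bar>x\<bar>"
  by (simp add: sgn_if)

theorem lemma3p3:
  fixes M :: "real^2^2" and \<epsilon> :: real
  assumes "SL2Z M" and "hyperbolic M" and "\<epsilon> > 0"
  shows "\<exists>cM > 0. \<forall>\<kappa>. 0 \<le> \<kappa> \<and> \<kappa> < cM \<longrightarrow>
    (\<exists>c1 c2. c1 > c2 \<and> c2 > 0 \<and>
      (\<forall>n1 n2. int_vec n1 \<and> int_vec n2 \<longrightarrow>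
        (\<exists>y. norm1 y < \<epsilon> \<and>
          (\<forall>R :: real^2 \<Rightarrow> real. (\<forall>z. R z \<ge> 0) \<and>
              (\<forall>z. norm1 z < \<epsilon> \<longrightarrow> R z \<le> \<kappa> * norm1 z) \<longrightarrow>
            - c1 * (Mnorm M n1 - Mnorm M n2) - (n2 \<bullet> (M *v y) - n1 \<bullet> y)
              + norm1 n2 * R y
            \<le> - c2 * (norm1 n1 + norm1 n2)))))"
proof -
  obtain L g where L1: "L \<ge> 1" and g0: "0 < g" "g \<le> 1"
    and lip: "\<And>x z. \<bar>Mnorm M x - Mnorm M z\<bar> \<le> L * norm1 (x - z)"
    and exp: "\<And>n. Mnorm M (transpose M *v n) - Mnorm M n \<ge> g * norm1 n"
    using key[OF assms(1,2)] by blast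
  define K where "K = \<bar>M$1$1\<bar> + \<bar>M$1$2\<bar> + \<bar>M$2$1\<bar> + \<bar>M$2$2\<bar>"
  have K0: "K \<ge> 0" by (simp add: K_def)
  have Kb: "norm1 (transpose M *v n) \<le> K * norm1 n" for n
    unfolding K_def by (rule Tbound)
  have inn: "n \<bullet> (M *v y) = (transpose M *v n) \<bullet> y" for n y :: "real^2"
    by (simp add: inner_vec_def sum_2 mv2 transpose_def algebra_simps)
  define \<delta> where "\<delta> = \<epsilon>/2"
  have d0: "\<delta> > 0" using assms(3) by (simp add: \<delta>_def)
  define cM where "cM = g / (8*L)"
  have cM0: "cM > 0" using g0 L1 by (simp add: cM_def)
  show ?thesis
  proof (rule exI[of _ cM], intro conjI allI impI cM0)
    fix \<kappa> :: real assume k: "0 \<le> \<kappa> \<and> \<kappa> < cM"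
    define c1 where "c1 = \<delta> / (4*L)"
    define c2 where "c2 = c1 * g / (2*(K+1))"
    have c10: "c1 > 0" using d0 L1 by (simp add: c1_def)
    have c1L: "c1 * L = \<delta>/4" using L1 by (simp add: c1_def)
    have c2e: "c2 * (K+1) = c1 * g / 2" using K0 by (simp add: c2_def field_simps)
    have c20: "c2 > 0" using c10 g0 K0 by (simp add: c2_def)
    have c2le: "c2 \<le> c1 / 2"
    proof -
      have "g / (2*(K+1)) \<le> 1/2" using g0 K0 by (simp add: field_simps)
      hence "c1 * (g / (2*(K+1))) \<le> c1 * (1/2)" using c10 by (intro mult_left_mono) auto
      thus ?thesis by (simp add: c2_def)
    qed
    have c2d: "c2 \<le> \<delta>/4"
    proof -
      have "c1 \<le> \<delta>/4" using L1 d0 by (simp add: c1_def field_simps)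
      thus ?thesis using c2le c10 by linarith
    qed
    have kd: "\<kappa> * \<delta> \<le> c1 * g / 2"
    proof -
      have "\<kappa> * \<delta> \<le> cM * \<delta>" using k d0 by (intro mult_right_mono) auto
      also have "cM * \<delta> = c1 * g / 2" using L1 by (simp add: cM_def c1_def field_simps)
      finally show ?thesis .
    qed
    show "\<exists>c1 c2. c1 > c2 \<and> c2 > 0 \<and>
      (\<forall>n1 n2. int_vec n1 \<and> int_vec n2 \<longrightarrow>
        (\<exists>y. norm1 y < \<epsilon> \<and>
          (\<forall>R :: real^2 \<Rightarrow> real. (\<forall>z. R z \<ge> 0) \<and>
              (\<forall>z. norm1 z < \<epsilon> \<longrightarrow> R z \<le> \<kappa> * norm1 z) \<longrightarrow>
            - c1 * (Mnorm M n1 - Mnorm M n2) - (n2 \<bullet> (M *v y) - n1 \<bullet> y)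
              + norm1 n2 * R y
            \<le> - c2 * (norm1 n1 + norm1 n2))))"
    proof (rule exI[of _ c1], rule exI[of _ c2], intro conjI allI impI c20)
      show "c2 < c1" using c2le c10 by linarith
      fix n1 n2 :: "real^2"
      define w where "w = transpose M *v n2 - n1"
      define y :: "real^2" where "y = (\<chi> i. (\<delta>/2) * sgn (w$i))"
      have ny: "norm1 y \<le> \<delta>"
      proof -
        have "\<bar>sgn (w$i)\<bar> \<le> 1" for i by (simp add: sgn_if)
        hence "\<bar>(\<delta>/2) * sgn (w$i)\<bar> \<le> \<delta>/2" for i using d0 by (simp add: abs_mult)
        hence "\<bar>y$1\<bar> \<le> \<delta>/2" "\<bar>y$2\<bar> \<le> \<delta>/2" by (simp_all add: y_def)
        thus ?thesis unfolding norm1_def by linarith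
      qed
      have wy: "w \<bullet> y = (\<delta>/2) * norm1 w"
        by (simp add: y_def inner_vec_def sum_2 norm1_def algebra_simps sgn_self[symmetric])
      show "\<exists>y. norm1 y < \<epsilon> \<and>
          (\<forall>R :: real^2 \<Rightarrow> real. (\<forall>z. R z \<ge> 0) \<and>
              (\<forall>z. norm1 z < \<epsilon> \<longrightarrow> R z \<le> \<kappa> * norm1 z) \<longrightarrow>
            - c1 * (Mnorm M n1 - Mnorm M n2) - (n2 \<bullet> (M *v y) - n1 \<bullet> y)
              + norm1 n2 * R y
            \<le> - c2 * (norm1 n1 + norm1 n2))"
      proof (rule exI[of _ y], intro conjI allI impI)
        show yl: "norm1 y < \<epsilon>" using ny d0 by (simp add: \<delta>_def)
        fix R :: "real^2 \<Rightarrow> real"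
        assume R: "(\<forall>z. R z \<ge> 0) \<and> (\<forall>z. norm1 z < \<epsilon> \<longrightarrow> R z \<le> \<kappa> * norm1 z)"
        have Ry: "R y \<le> \<kappa> * \<delta>"
        proof -
          have "R y \<le> \<kappa> * norm1 y" using R yl by blast
          also have "\<dots> \<le> \<kappa> * \<delta>" using ny k by (intro mult_left_mono) auto
          finally show ?thesis .
        qed
        define W where "W = norm1 w"
        define N1 where "N1 = norm1 n1"
        define N2 where "N2 = norm1 n2"
        have W0: "W \<ge> 0" "N2 \<ge> 0" by (simp_all add: W_def N2_def norm1_nn)
        have h1: "Mnorm M n1 - Mnorm M (transpose M *v n2) \<ge> - L * W"
          using lip[of n1 "transpose M *v n2"] norm1_minus[of n1 "transpose M *v n2"]
          by (simp add: W_def w_def)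
        have h2: "Mnorm M (transpose M *v n2) - Mnorm M n2 \<ge> g * N2"
          using exp[of n2] by (simp add: N2_def)
        define X where "X = c1 * g * N2"
        define V where "V = \<delta> * W"
        have A: "- c1 * (Mnorm M n1 - Mnorm M n2) \<le> V/4 - X"
        proof -
          have "c1 * (g * N2 - L * W) \<le> c1 * (Mnorm M n1 - Mnorm M n2)"
            using h1 h2 c10 by (intro mult_left_mono) auto
          hence "- c1 * (Mnorm M n1 - Mnorm M n2) \<le> (c1 * L) * W - c1 * g * N2" by (simp add: algebra_simps)
          thus ?thesis unfolding c1L X_def V_def by simp
        qed
        have B: "N2 * R y \<le> X/2"
        proof -
          have "N2 * R y \<le> N2 * (c1 * g / 2)" using Ry kd W0 by (intro mult_left_mono) auto
          thus ?thesis by (simp add: X_def mult.commute mult.left_commute)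
        qed
        have C: "N1 \<le> K * N2 + W"
          using norm1_tri[of "transpose M *v n2" w] Kb[of n2]
          by (simp add: N1_def N2_def W_def w_def)
        have E: "n2 \<bullet> (M *v y) - n1 \<bullet> y = V/2"
          using wy by (simp add: inn w_def inner_diff_left W_def V_def)
        have F: "c2 * (N1 + N2) \<le> c2 * ((K+1) * N2 + W)"
          using C c20 by (intro mult_left_mono) (auto simp: algebra_simps)
        have F2: "c2 * ((K+1) * N2 + W) = X/2 + c2 * W"
        proof -
          have "c2 * ((K+1) * N2 + W) = (c2 * (K+1)) * N2 + c2 * W" by (simp add: algebra_simps)
          thus ?thesis unfolding c2e X_def by simp
        qed
        have G: "c2 * W \<le> (\<delta>/4) * W" using c2d W0 by (intro mult_right_mono) auto
        have G2: "(\<delta>/4) * W = V/4" by (simp add: V_def)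
        have "- c1 * (Mnorm M n1 - Mnorm M n2) - (n2 \<bullet> (M *v y) - n1 \<bullet> y) + N2 * R y
              \<le> - (c2 * (N1 + N2))"
          using A B E F F2 G G2 by linarith
        thus "- c1 * (Mnorm M n1 - Mnorm M n2) - (n2 \<bullet> (M *v y) - n1 \<bullet> y)
              + norm1 n2 * R y \<le> - c2 * (norm1 n1 + norm1 n2)"
          by (simp add: N1_def N2_def)
      qed
    qed
  qed
qed

end
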